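(* Let $(\mathbf{P}^0_t)_{t\ge0}$ be the semi-group defined by $\mathbf{P}^0_t f(x)=\mathbb{E}\big[f\big(\max(x-t,\ Z+\log(1-e^{-t}))\big)\big]$ with $Z$ standard Gumbel. Its generator $\mathscr{L}_0 f(x)=\frac{d}{dt}\mathbf{P}^0_t f(x)\big|_{t=0}$ is given, for all $f\in\mathrm{Lip}_{[2]}(\mathbb{R})$ and $x\in\mathbb{R}$, by \[ \mathscr{L}_0 f(x) = -f'(x)+e^{-x}\,\mathbb{E}\big[f(x+Y)-f(x)\big] = -f'(x)+e^{-x}\,\mathbb{E}\big[f'(x+Y)\big], \] where $Y$ has the exponential distribution $\mathcal{E}(1)$ with parameter $1$.
   Context: The standard Gumbel distribution has density $x\mapsto e^{-(x+e^{-x})}$ on $\mathbb{R}$; convention $\log 0=-\infty$. $\mathrm{Lip}_{[2]}(\mathbb{R})$ is the set of Lipschitz functions $f:\mathbb{R}\to\mathbb{R}$ whose derivative $f'$ admits a Lipschitz representative. *)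

theory Defs
  imports "HOL-Probability.Probability"
begin

definition gumbel :: "real measure" where
  "gumbel = density lborel (\<lambda>x. ennreal (exp (- (x + exp (- x)))))"

definition expo1 :: "real measure" where
  "expo1 = density lborel (exponential_density 1)"

text \<open>Lip_[2](R): f Lipschitz, differentiable, with Lipschitz derivative
  (a Lipschitz representative of the a.e. derivative of a Lipschitz f forces f to be C^1
  with that derivative everywhere).\<close>
definition Lip2 :: "(real \<Rightarrow> real) \<Rightarrow> bool" where
  "Lip2 f \<longleftrightarrow> (\<exists>C. C-lipschitz_on UNIV f) \<and> (\<forall>x. f differentiable (at x))
      \<and> (\<exists>C. C-lipschitz_on UNIV (deriv f))"

text \<open>The semigroup P^0_t; at t = 0, log 0 = -infinity so the max is x.\<close>
definition P0 :: "real \<Rightarrow> (real \<Rightarrow> real) \<Rightarrow> real \<Rightarrow> real" where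
  "P0 t f x = (if t = 0 then f x
     else (\<integral>z. f (max (x - t) (z + ln (1 - exp (- t)))) \<partial>gumbel))"

end

theory Submission
  imports Defs "HOL-Real_Asymp.Real_Asymp"
begin

lemma gumbel_prob: "prob_space gumbel"
proof -
  define g where "g = (\<lambda>z::real. exp (- (z + exp (- z))))"
  define G where "G = (\<lambda>z::real. exp (- exp (- z)))"
  have D: "DERIV G z :> g z" for z
    unfolding G_def g_def
    by (rule derivative_eq_intros refl | simp add: mult_exp_exp)+
  have lt: "(-\<infinity>::ereal) < \<infinity>" by simp
  have A: "((G \<circ> real_of_ereal) \<longlongrightarrow> 0) (at_right (-\<infinity>))"
    unfolding ereal_tendsto_simps1 G_def by real_asymp
  have B: "((G \<circ> real_of_ereal) \<longlongrightarrow> 1) (at_left \<infinity>)"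
    unfolding ereal_tendsto_simps1 G_def by real_asymp
  have si: "set_integrable lborel UNIV g" and ii: "(LBINT x=-\<infinity>..\<infinity>. g x) = 1"
    using interval_integral_FTC_nonneg[OF lt D _ _ A B]
    by (auto simp: g_def)
  have int: "integrable lborel g" using si by (simp add: set_integrable_def)
  have "(\<integral>x. g x \<partial>lborel) = 1" using ii
    by (simp add: interval_lebesgue_integral_def set_lebesgue_integral_def)
  then have "(\<integral>\<^sup>+x. ennreal (g x) \<partial>lborel) = 1"
    using nn_integral_eq_integral[OF int] by (simp add: g_def)
  then have "emeasure gumbel UNIV = 1"
    unfolding gumbel_def by (simp add: emeasure_density g_def)
  then show ?thesis by (intro prob_spaceI) (simp add: gumbel_def)
qed

lemma expo1_prob: "prob_space expo1"
  unfolding expo1_def by (rule prob_space_exponential_density) simp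

lemma expo1_space[simp]: "space expo1 = UNIV" and expo1_sets[simp]: "sets expo1 = sets borel"
  by (auto simp: expo1_def)

lemma ed_nonneg: "0 \<le> exponential_density 1 x"
  by (rule exponential_density_nonneg) simp

lemma ed_eq: "exponential_density 1 x = (if x < 0 then 0 else exp (- x))"
  by (simp add: exponential_density_def)

lemma expo1_integral:
  fixes g :: "real \<Rightarrow> real"
  assumes [measurable]: "g \<in> borel_measurable borel"
  shows "(\<integral>u. g u \<partial>expo1) = (\<integral>u. exponential_density 1 u * g u \<partial>lborel)"
  unfolding expo1_def
  by (subst integral_density) (auto simp: ed_nonneg)

lemma expo1_integrable:
  fixes g :: "real \<Rightarrow> real"
  assumes [measurable]: "g \<in> borel_measurable borel"
  shows "integrable expo1 g \<longleftrightarrow> integrable lborel (\<lambda>u. exponential_density 1 u * g u)"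
  unfolding expo1_def
  by (subst integrable_density) (auto simp: ed_nonneg)

lemma expo1_int_id: "integrable expo1 (\<lambda>u. u)"
proof -
  have "integrable lborel (\<lambda>u. exponential_density 1 u * u)"
  proof (rule integrableI_nonneg)
    show "AE x in lborel. 0 \<le> exponential_density 1 x * x"
      by (auto simp: exponential_density_def)
    show "(\<integral>\<^sup>+ x. ennreal (exponential_density 1 x * x) \<partial>lborel) < \<infinity>"
      using nn_integral_erlang_ith_moment[of 1 0 1] by simp
  qed simp
  then show ?thesis by (simp add: expo1_integrable)
qed

lemma expo1_int_abs: "integrable expo1 (\<lambda>u. C * \<bar>u\<bar>)"
  using expo1_int_id by (intro integrable_mult_right integrable_abs)

lemma expo1_int_const: "integrable expo1 (\<lambda>u. C)"
  by (intro finite_measure.integrable_const prob_space.finite_measure expo1_prob)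

lemma part2:
  fixes f :: "real \<Rightarrow> real"
  assumes L: "L-lipschitz_on UNIV f" and Dd: "\<And>x. (f has_real_derivative deriv f x) (at x)"
    and M: "M-lipschitz_on UNIV (deriv f)"
  shows "(\<integral>y. f (x + y) - f x \<partial>expo1) = (\<integral>y. deriv f (x + y) \<partial>expo1)"
proof -
  have L0: "0 \<le> L" using L lipschitz_on_nonneg by blast
  have M0: "0 \<le> M" using M lipschitz_on_nonneg by blast
  have cf: "continuous_on UNIV f" using L lipschitz_on_continuous_on by blast
  have cd: "continuous_on UNIV (deriv f)" using M lipschitz_on_continuous_on by blast
  have [measurable]: "f \<in> borel_measurable borel" using cf borel_measurable_continuous_onI by blast
  have [measurable]: "deriv f \<in> borel_measurable borel" using cd borel_measurable_continuous_onI by blast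
  have icf: "isCont f u" for u using cf by (simp add: continuous_on_eq_continuous_at)
  have icd: "isCont (deriv f) u" for u using cd by (simp add: continuous_on_eq_continuous_at)
  have Lb: "\<bar>f a - f b\<bar> \<le> L * \<bar>a - b\<bar>" for a b
    using lipschitz_onD[OF L, of a b] by (simp add: dist_real_def)
  have Mb: "\<bar>deriv f a - deriv f b\<bar> \<le> M * \<bar>a - b\<bar>" for a b
    using lipschitz_onD[OF M, of a b] by (simp add: dist_real_def)
  have i1: "integrable expo1 (\<lambda>u. f (x + u) - f x)"
  proof (rule Bochner_Integration.integrable_bound[OF expo1_int_abs[of L]])
    show "AE u in expo1. norm (f (x + u) - f x) \<le> norm (L * \<bar>u\<bar>)"
      using Lb[of "x + _" x] L0 by (auto simp: abs_mult)
  qed (unfold expo1_def, measurable)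
  have i2: "integrable expo1 (\<lambda>u. deriv f (x + u))"
  proof (rule Bochner_Integration.integrable_bound[OF Bochner_Integration.integrable_add[OF expo1_int_const[of "\<bar>deriv f x\<bar>"] expo1_int_abs[of M]]])
    show "AE u in expo1. norm (deriv f (x + u)) \<le> norm (\<bar>deriv f x\<bar> + M * \<bar>u\<bar>)"
    proof (intro AE_I2)
      fix u
      have "\<bar>deriv f (x + u)\<bar> \<le> \<bar>deriv f x\<bar> + M * \<bar>u\<bar>"
        using Mb[of "x + u" x] by simp
      then show "norm (deriv f (x + u)) \<le> norm (\<bar>deriv f x\<bar> + M * \<bar>u\<bar>)"
        using M0 by simp
    qed
  qed (unfold expo1_def, measurable)
  define \<phi> where "\<phi> = (\<lambda>u. (f (x + u) - f x) - deriv f (x + u))"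
  define k where "k = (\<lambda>u. exp (- u) * \<phi> u)"
  define F where "F = (\<lambda>u. - (f (x + u) - f x) * exp (- u))"
  have [measurable]: "\<phi> \<in> borel_measurable borel" unfolding \<phi>_def by measurable
  have i3: "integrable expo1 \<phi>" unfolding \<phi>_def using i1 i2 by (rule Bochner_Integration.integrable_diff)
  have eq1: "(\<integral>y. f (x + y) - f x \<partial>expo1) - (\<integral>y. deriv f (x + y) \<partial>expo1) = (\<integral>u. \<phi> u \<partial>expo1)"
    unfolding \<phi>_def using i1 i2 by simp
  have eq2: "(\<integral>u. \<phi> u \<partial>expo1) = (\<integral>u. exponential_density 1 u * \<phi> u \<partial>lborel)"
    by (rule expo1_integral) measurable
  have diff: "exponential_density 1 u * \<phi> u = indicator {0<..} u *\<^sub>R k u" if "u \<notin> {0}" for u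
    using that by (auto simp: ed_eq k_def indicator_def)
  have i4: "integrable lborel (\<lambda>u. exponential_density 1 u * \<phi> u)"
    using i3 by (simp add: expo1_integrable)
  have eq3: "(\<integral>u. exponential_density 1 u * \<phi> u \<partial>lborel) = (\<integral>u. indicator {0<..} u *\<^sub>R k u \<partial>lborel)"
    by (rule integral_discrete_difference[where X="{0}"]) (auto simp: diff)
  have si: "set_integrable lborel (einterval 0 \<infinity>) k"
  proof -
    have "integrable lborel (\<lambda>u. indicator {0<..} u *\<^sub>R k u)"
      using i4 by (subst integrable_discrete_difference[where X="{0}", symmetric]) (auto simp: diff)
    moreover have "einterval 0 \<infinity> = {0<..}" by (auto simp: einterval_def zero_ereal_def)
    ultimately show ?thesis by (simp add: set_integrable_def)
  qed
  have FD: "(F has_vector_derivative k u) (at u)" for u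
  proof -
    have d1: "((\<lambda>u. f (x + u)) has_real_derivative deriv f (x + u)) (at u)"
      using DERIV_chain2[OF Dd DERIV_add[OF DERIV_const[of x] DERIV_ident]] by simp
    have "(F has_real_derivative (- deriv f (x + u) * exp (- u) + (f (x + u) - f x) * exp (- u))) (at u)"
      unfolding F_def
      using DERIV_mult[OF DERIV_minus[OF DERIV_diff[OF d1 DERIV_const[of "f x"]]] DERIV_exp[THEN DERIV_chain2, OF DERIV_minus[OF DERIV_ident]]]
      by (simp add: algebra_simps)
    moreover have "- deriv f (x + u) * exp (- u) + (f (x + u) - f x) * exp (- u) = k u"
      by (simp add: k_def \<phi>_def algebra_simps)
    ultimately have "(F has_real_derivative k u) (at u)" by simp
    then show ?thesis by (simp add: has_real_derivative_iff_has_vector_derivative)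
  qed
  have icf2: "isCont (\<lambda>u. f (x + u)) u" for u
  proof -
    have "isCont (\<lambda>u. x + u) u" by simp
    from isCont_o2[OF this icf] show ?thesis by simp
  qed
  have icd2: "isCont (\<lambda>u. deriv f (x + u)) u" for u
  proof -
    have "isCont (\<lambda>u. x + u) u" by simp
    from isCont_o2[OF this icd] show ?thesis by simp
  qed
  have kc: "isCont k u" for u
  proof -
    have e: "isCont (\<lambda>u. exp (- u)) u" for u :: real by (intro continuous_intros)
    show ?thesis unfolding k_def \<phi>_def
      by (rule isCont_mult[OF e isCont_diff[OF isCont_diff[OF icf2 continuous_const] icd2]])
  qed
  have FA: "((F \<circ> real_of_ereal) \<longlongrightarrow> 0) (at_right 0)"
  proof -
    have e: "isCont (\<lambda>u. exp (- u)) u" for u :: real by (intro continuous_intros)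
    have "isCont F 0" unfolding F_def
      by (rule isCont_mult[OF isCont_minus[OF isCont_diff[OF icf2 continuous_const]] e])
    then have "(F \<longlongrightarrow> F 0) (at 0)" by (simp add: isCont_def)
    then have "(F \<longlongrightarrow> F 0) (at_right 0)" by (rule tendsto_mono[OF at_le, rotated]) simp
    then have "(F \<longlongrightarrow> 0) (at_right 0)" by (simp add: F_def)
    then have "((F \<circ> real_of_ereal) \<longlongrightarrow> 0) (at_right (ereal 0))"
      by (simp only: ereal_tendsto_simps1)
    then show ?thesis by (simp only: zero_ereal_def)
  qed
  have FB: "((F \<circ> real_of_ereal) \<longlongrightarrow> 0) (at_left \<infinity>)"
  proof -
    have lim: "((\<lambda>u. L * (u * exp (- u))) \<longlongrightarrow> 0) at_top"
      by (rule tendsto_mult_right_zero) real_asymp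
    have "(F \<longlongrightarrow> 0) at_top"
    proof (rule Lim_null_comparison[OF _ lim])
      show "\<forall>\<^sub>F u in at_top. norm (F u) \<le> L * (u * exp (- u))"
        using eventually_ge_at_top[of 0]
      proof eventually_elim
        case (elim u)
        have "norm (F u) = \<bar>f (x + u) - f x\<bar> * exp (- u)" by (simp add: F_def abs_mult)
        also have "\<dots> \<le> (L * \<bar>u\<bar>) * exp (- u)" using Lb[of "x + u" x] by (intro mult_right_mono) auto
        finally show ?case using elim by simp
      qed
    qed
    then show ?thesis unfolding ereal_tendsto_simps1 .
  qed
  have "(LBINT u=0..\<infinity>. k u) = 0 - 0"
    by (rule interval_integral_FTC_integrable[OF _ FD kc si FA FB]) simp
  moreover have "(LBINT u=0..\<infinity>. k u) = (\<integral>u. indicator {0<..} u *\<^sub>R k u \<partial>lborel)"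
    by (simp add: interval_lebesgue_integral_def set_lebesgue_integral_def einterval_def zero_ereal_def greaterThan_def)
  ultimately show ?thesis using eq1 eq2 eq3 by simp
qed

definition hh :: "(real \<Rightarrow> real) \<Rightarrow> real \<Rightarrow> real \<Rightarrow> real \<Rightarrow> real" where
  "hh f x t u = (f (x - t + u) - f (x - t)) * ((1 - exp (- t)) / t) * exp (- (x - t))
      * exp (- ((1 - exp (- t)) * exp (- (x - t)) * exp (- u)))"

lemma repr:
  fixes f :: "real \<Rightarrow> real"
  assumes L: "L-lipschitz_on UNIV f" and t: "0 < t"
  shows "integrable expo1 (hh f x t)" and "P0 t f x = f (x - t) + t * (\<integral>u. hh f x t u \<partial>expo1)"
proof -
  have L0: "0 \<le> L" using L lipschitz_on_nonneg by blast
  have cf: "continuous_on UNIV f" using L lipschitz_on_continuous_on by blast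
  have [measurable]: "f \<in> borel_measurable borel" using cf borel_measurable_continuous_onI by blast
  have Lb: "\<bar>f a - f b\<bar> \<le> L * \<bar>a - b\<bar>" for a b
    using lipschitz_onD[OF L, of a b] by (simp add: dist_real_def)
  define a where "a = x - t"
  define s where "s = 1 - exp (- t)"
  define c where "c = ln s"
  have s0: "0 < s" using t by (simp add: s_def)
  have s1: "s / t \<le> 1" using t exp_ge_add_one_self[of "- t"] by (simp add: s_def)
  have ec: "exp c = s" using s0 by (simp add: c_def)
  define gd where "gd = (\<lambda>z::real. exp (- (z + exp (- z))))"
  define K where "K = (\<lambda>z. f (max a (z + c)) - f a)"
  have [measurable]: "gd \<in> borel_measurable borel" unfolding gd_def by measurable
  have [measurable]: "K \<in> borel_measurable borel" unfolding K_def by measurable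
  have [measurable]: "hh f x t \<in> borel_measurable borel" unfolding hh_def by measurable
  have hb: "norm (hh f x t u) \<le> norm ((L * (s / t) * exp (- a)) * \<bar>u\<bar>)" for u
  proof -
    have "norm (hh f x t u) = \<bar>f (a + u) - f a\<bar> * ((s / t) * exp (- a)
         * exp (- (s * exp (- a) * exp (- u))))"
      using t s0 by (simp add: hh_def a_def s_def abs_mult)
    also have "\<dots> \<le> (L * \<bar>u\<bar>) * ((s / t) * exp (- a) * 1)"
      using Lb[of "a + u" a] s0 t
      by (intro mult_mono mult_left_mono) (auto intro!: mult_nonneg_nonneg)
    finally show ?thesis using L0 s0 t by (simp add: abs_mult mult_ac)
  qed
  show ih: "integrable expo1 (hh f x t)"
  proof (rule Bochner_Integration.integrable_bound[OF expo1_int_abs[of "L * (s / t) * exp (- a)"]])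
    show "hh f x t \<in> borel_measurable expo1" unfolding expo1_def by measurable
  qed (rule AE_I2[OF hb])
  have pw: "gd (a - c + u) * K (a - c + u) = t * (exponential_density 1 u * hh f x t u)" for u
  proof (cases "u < 0")
    case True
    then show ?thesis by (simp add: K_def ed_eq max_def)
  next
    case False
    have e1: "exp (- (a - c + u)) = s * exp (- a) * exp (- u)"
    proof -
      have "- (a - c + u) = c + (- a) + (- u)" by simp
      then have "exp (- (a - c + u)) = exp c * exp (- a) * exp (- u)" by (simp only: exp_add)
      then show ?thesis using ec by simp
    qed
    have "gd (a - c + u) = s * exp (- a) * exp (- u) * exp (- (s * exp (- a) * exp (- u)))"
    proof -
      have "gd z = exp (- z) * exp (- exp (- z))" for z by (simp add: gd_def mult_exp_exp)
      then show ?thesis by (simp only: e1)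
    qed
    moreover have "K (a - c + u) = f (a + u) - f a" using False by (simp add: K_def max_def)
    moreover have "t * (exponential_density 1 u * hh f x t u) = t * (exp (- u) * ((f (a + u) - f a)
        * (s / t) * exp (- a) * exp (- (s * exp (- a) * exp (- u)))))"
      using False by (simp add: ed_eq hh_def a_def s_def add.commute diff_add_eq)
    moreover have "\<And>A B Q D. (s * A * B * Q) * D = t * (B * (D * (s / t) * A * Q))"
      using t by (simp add: field_simps)
    ultimately show ?thesis by simp
  qed
  have i1: "integrable lborel (\<lambda>u. exponential_density 1 u * hh f x t u)"
    using ih by (simp add: expo1_integrable)
  have i2: "integrable lborel (\<lambda>u. gd (a - c + 1 * u) * K (a - c + 1 * u))"
    using i1 by (simp add: pw)
  have i3: "integrable lborel (\<lambda>z. gd z * K z)"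
    using i2 lborel_integrable_real_affine_iff[of 1 "\<lambda>z. gd z * K z" "a - c"] by simp
  have gd0: "0 \<le> gd z" for z by (simp add: gd_def)
  have gum: "gumbel = density lborel gd" by (simp add: gumbel_def gd_def)
  have iK: "integrable gumbel K"
    unfolding gum using i3
    by (subst integrable_density) (auto simp: gd0)
  have "P0 t f x = (\<integral>z. f (max a (z + c)) \<partial>gumbel)"
    using t by (simp add: P0_def a_def c_def s_def)
  also have "\<dots> = (\<integral>z. f a + K z \<partial>gumbel)" by (simp add: K_def)
  also have "\<dots> = f a + (\<integral>z. K z \<partial>gumbel)"
  proof -
    interpret prob_space gumbel by (rule gumbel_prob)
    show ?thesis using iK by (simp add: prob_space)
  qed
  also have "(\<integral>z. K z \<partial>gumbel) = (\<integral>z. gd z * K z \<partial>lborel)"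
    unfolding gum
    by (subst integral_density) (auto simp: gd0)
  also have "\<dots> = (\<integral>u. gd (a - c + 1 * u) * K (a - c + 1 * u) \<partial>lborel)"
    using lborel_integral_real_affine[of 1 "\<lambda>z. gd z * K z" "a - c"] by simp
  also have "\<dots> = (\<integral>u. t * (exponential_density 1 u * hh f x t u) \<partial>lborel)"
    by (simp add: pw)
  also have "\<dots> = t * (\<integral>u. hh f x t u \<partial>expo1)"
    by (simp add: expo1_integral)
  finally show "P0 t f x = f (x - t) + t * (\<integral>u. hh f x t u \<partial>expo1)" by (simp add: a_def)
qed

lemma lim_hh:
  fixes f :: "real \<Rightarrow> real"
  assumes L: "L-lipschitz_on UNIV f"
  shows "((\<lambda>t. \<integral>u. hh f x t u \<partial>expo1) \<longlongrightarrow> (\<integral>u. exp (- x) * (f (x + u) - f x) \<partial>expo1)) (at_right 0)"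
proof -
  have L0: "0 \<le> L" using L lipschitz_on_nonneg by blast
  have cf: "continuous_on UNIV f" using L lipschitz_on_continuous_on by blast
  have [measurable]: "f \<in> borel_measurable borel" using cf borel_measurable_continuous_onI by blast
  have icf: "isCont f u" for u using cf by (simp add: continuous_on_eq_continuous_at)
  have Lb: "\<bar>f a - f b\<bar> \<le> L * \<bar>a - b\<bar>" for a b
    using lipschitz_onD[OF L, of a b] by (simp add: dist_real_def)
  have lst: "((\<lambda>t::real. (1 - exp (- t)) / t) \<longlongrightarrow> 1) (at_right 0)" by real_asymp
  have plim: "((\<lambda>t. hh f x t u) \<longlongrightarrow> exp (- x) * (f (x + u) - f x)) (at_right 0)" for u
  proof -
    have a1: "((\<lambda>t. f (x - t + u) - f (x - t)) \<longlongrightarrow> f (x - 0 + u) - f (x - 0)) (at_right 0)"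
      by (intro tendsto_intros isCont_tendsto_compose[OF icf])
    have a2: "((\<lambda>t::real. exp (- (x - t))) \<longlongrightarrow> exp (- (x - 0))) (at_right 0)"
      by (intro tendsto_intros)
    have a3: "((\<lambda>t::real. exp (- ((1 - exp (- t)) * exp (- (x - t)) * exp (- u))))
       \<longlongrightarrow> exp (- ((1 - exp (- 0)) * exp (- (x - 0)) * exp (- u)))) (at_right 0)"
      by (intro tendsto_intros)
    from tendsto_mult[OF tendsto_mult[OF tendsto_mult[OF a1 lst] a2] a3]
    show ?thesis unfolding hh_def by (simp add: mult_ac)
  qed
  define w where "w = (\<lambda>u::real. (L * exp (1 - x)) * \<bar>u\<bar>)"
  have bnd: "norm (hh f x t u) \<le> w u" if t: "0 < t" "t < 1" for t u
  proof -
    define s where "s = 1 - exp (- t)"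
    have s0: "0 < s" using t by (simp add: s_def)
    have s1: "s / t \<le> 1" using t exp_ge_add_one_self[of "- t"] by (simp add: s_def)
    have "norm (hh f x t u) = \<bar>f (x - t + u) - f (x - t)\<bar> * ((s / t) * exp (- (x - t))
         * exp (- (s * exp (- (x - t)) * exp (- u))))"
      using t s0 by (simp add: hh_def s_def abs_mult)
    also have "\<dots> \<le> (L * \<bar>u\<bar>) * (1 * exp (1 - x) * 1)"
      using Lb[of "x - t + u" "x - t"] s0 s1 t
      by (intro mult_mono mult_left_mono) (auto intro!: mult_nonneg_nonneg)
    finally show ?thesis using L0 by (simp add: w_def mult_ac)
  qed
  show ?thesis
  proof (rule tendsto_at_right_sequentially[of 0 1])
    fix S :: "nat \<Rightarrow> real"
    assume S0: "\<And>n. 0 < S n" and S1: "\<And>n. S n < 1" and "decseq S" and Sl: "S \<longlonglongrightarrow> 0"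
    have Sf: "filterlim S (at_right 0) sequentially"
      using S0 Sl by (auto simp: filterlim_at intro!: always_eventually less_imp_neq[symmetric])
    show "(\<lambda>n. \<integral>u. hh f x (S n) u \<partial>expo1) \<longlonglongrightarrow> (\<integral>u. exp (- x) * (f (x + u) - f x) \<partial>expo1)"
    proof (rule integral_dominated_convergence[where w = w])
      show "(\<lambda>u. exp (- x) * (f (x + u) - f x)) \<in> borel_measurable expo1"
        unfolding expo1_def by measurable
      show "hh f x (S n) \<in> borel_measurable expo1" for n
        unfolding expo1_def hh_def by measurable
      show "integrable expo1 w" unfolding w_def by (rule expo1_int_abs)
      show "AE u in expo1. (\<lambda>n. hh f x (S n) u) \<longlonglongrightarrow> exp (- x) * (f (x + u) - f x)"
        by (intro AE_I2 filterlim_compose[OF plim Sf])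
      show "AE u in expo1. norm (hh f x (S n) u) \<le> w u" for n
        by (intro AE_I2 bnd S0 S1)
    qed
  qed simp
qed

theorem proposition2p3:
  fixes f :: "real \<Rightarrow> real" and x :: real
  assumes "Lip2 f"
  shows "((\<lambda>t. P0 t f x) has_real_derivative
            (- deriv f x + exp (- x) * (\<integral>y. f (x + y) - f x \<partial>expo1))) (at_right 0)
       \<and> - deriv f x + exp (- x) * (\<integral>y. f (x + y) - f x \<partial>expo1)
         = - deriv f x + exp (- x) * (\<integral>y. deriv f (x + y) \<partial>expo1)"
proof -
  obtain L M where L: "L-lipschitz_on UNIV f" and M: "M-lipschitz_on UNIV (deriv f)"
    and dif: "\<And>y. f differentiable (at y)"
    using assms unfolding Lip2_def by blast
  have Dd: "\<And>y. (f has_real_derivative deriv f y) (at y)"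
    using dif DERIV_deriv_iff_real_differentiable by blast
  have d1: "((\<lambda>t. f (x - t)) has_real_derivative deriv f x * (- 1)) (at 0)"
    using DERIV_chain2[OF Dd DERIV_diff[OF DERIV_const[of x] DERIV_ident], of 0] by simp
  have l1: "((\<lambda>t. (f (x - t) - f x) / t) \<longlongrightarrow> - deriv f x) (at_right 0)"
  proof -
    have "((\<lambda>t. (f (x - t) - f (x - 0)) / (t - 0)) \<longlongrightarrow> deriv f x * (- 1)) (at 0)"
      using d1 unfolding has_field_derivative_iff .
    then have "((\<lambda>t. (f (x - t) - f (x - 0)) / (t - 0)) \<longlongrightarrow> deriv f x * (- 1)) (at_right 0)"
      by (rule tendsto_mono[OF at_le, rotated]) simp
    then show ?thesis by simp
  qed
  have l2: "((\<lambda>t. \<integral>u. hh f x t u \<partial>expo1) \<longlongrightarrow> exp (- x) * (\<integral>u. f (x + u) - f x \<partial>expo1)) (at_right 0)"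
    using lim_hh[OF L, of x] by simp
  have "((\<lambda>t. (P0 t f x - P0 0 f x) / (t - 0)) \<longlongrightarrow>
      (- deriv f x + exp (- x) * (\<integral>y. f (x + y) - f x \<partial>expo1))) (at_right 0)"
  proof (rule Lim_transform_eventually[OF tendsto_add[OF l1 l2]])
    show "\<forall>\<^sub>F t in at_right 0. (f (x - t) - f x) / t + (\<integral>u. hh f x t u \<partial>expo1)
        = (P0 t f x - P0 0 f x) / (t - 0)"
      using eventually_at_right_less[of 0]
    proof eventually_elim
      case (elim t)
      have p0: "P0 0 f x = f x" by (simp add: P0_def)
      have "(P0 t f x - P0 0 f x) / (t - 0) = ((f (x - t) - f x) + t * (\<integral>u. hh f x t u \<partial>expo1)) / t"
        unfolding p0 repr(2)[OF L elim, of x] by simp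
      also have "\<dots> = (f (x - t) - f x) / t + (\<integral>u. hh f x t u \<partial>expo1)"
        using elim by (simp add: add_divide_distrib)
      finally show ?case by simp
    qed
  qed
  then have "((\<lambda>t. P0 t f x) has_real_derivative
            (- deriv f x + exp (- x) * (\<integral>y. f (x + y) - f x \<partial>expo1))) (at_right 0)"
    unfolding has_field_derivative_iff .
  then show ?thesis using part2[OF L Dd M, of x] by simp
qed

end
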